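(* Let $G$ be a group and $\iota\in G$ an element for which there is a finite normal subgroup $L\lhd G$ such that the image of $\iota$ is central in $G/L$. Let $A$ and $B$ be $\mathbb{Q}[G]$-modules with $A$ gr-odd. If $B$ is gr-odd (resp. gr-even), then both $A\otimes_{\mathbb{Q}}B$ and $\mathrm{Hom}_{\mathbb{Q}}(A,B)$ are gr-even (resp. gr-odd). The analogous statement with $A$ gr-even also holds (i.e. if $A$ is gr-even, then $A\otimes_{\mathbb{Q}}B$ and $\mathrm{Hom}_{\mathbb{Q}}(A,B)$ are gr-odd if $B$ is gr-odd and gr-even if $B$ is gr-even).
   Context: $A\otimes_{\mathbb{Q}}B$ carries the diagonal $G$-action and $\mathrm{Hom}_{\mathbb{Q}}(A,B)$ the conjugation action. A $\mathbb{Q}[G]$-module $M$ is odd if $\iota\cdot m=-m$ for all $m$, even if $\iota\cdot m=m$ for all $m$; it is gr-odd (resp. gr-even) if it has a finite filtration by $\mathbb{Q}[G]$-submodules $0=F_{-1}M\subseteq\cdots\subseteq F_kM=M$ with all quotients $F_{i+1}M/F_iM$ odd (resp. even). *)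

theory Defs
  imports "HOL-Algebra.Algebra" "HOL-Library.Function_Algebras"
begin

definition QG_module :: "'g monoid \<Rightarrow> (rat \<Rightarrow> 'v::ab_group_add \<Rightarrow> 'v) \<Rightarrow> ('g \<Rightarrow> 'v \<Rightarrow> 'v) \<Rightarrow> bool" where
  "QG_module G s act \<longleftrightarrow>
     Vector_Spaces.vector_space s \<and>
     (\<forall>g\<in>carrier G. Vector_Spaces.linear s s (act g)) \<and>
     act \<one>\<^bsub>G\<^esub> = id \<and>
     (\<forall>g\<in>carrier G. \<forall>h\<in>carrier G. act (g \<otimes>\<^bsub>G\<^esub> h) = act g \<circ> act h)"

definition QG_submodule ::
  "'g monoid \<Rightarrow> 'v set \<Rightarrow> ('v \<Rightarrow> 'v \<Rightarrow> 'v) \<Rightarrow> 'v \<Rightarrow> (rat \<Rightarrow> 'v \<Rightarrow> 'v) \<Rightarrow> ('g \<Rightarrow> 'v \<Rightarrow> 'v) \<Rightarrow> 'v set \<Rightarrow> bool" where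
  "QG_submodule G V pl nul scale act W \<longleftrightarrow>
     W \<subseteq> V \<and> nul \<in> W \<and>
     (\<forall>x\<in>W. \<forall>y\<in>W. pl x y \<in> W) \<and>
     (\<forall>c. \<forall>x\<in>W. scale c x \<in> W) \<and>
     (\<forall>g\<in>carrier G. \<forall>x\<in>W. act g x \<in> W)"

text \<open>The filtration 0 = F_{-1} <= F_0 <= ... <= F_k = M of the paper
  is indexed here as F 0 = 0, F (j+1) = F_j. The quotient F(i+1)/F(i) is odd iff
  iota.m + m lies in F i for every m in F(i+1), and even iff iota.m - m lies in F i.\<close>
definition gr_odd ::
  "'g monoid \<Rightarrow> 'g \<Rightarrow> 'v set \<Rightarrow> ('v \<Rightarrow> 'v \<Rightarrow> 'v) \<Rightarrow> 'v \<Rightarrow> (rat \<Rightarrow> 'v \<Rightarrow> 'v) \<Rightarrow> ('g \<Rightarrow> 'v \<Rightarrow> 'v) \<Rightarrow> bool" where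
  "gr_odd G \<iota> V pl nul scale act \<longleftrightarrow>
     (\<exists>F :: nat \<Rightarrow> 'v set. \<exists>k.
        (\<forall>i\<le>k. QG_submodule G V pl nul scale act (F i)) \<and>
        F 0 = {nul} \<and> F k = V \<and>
        (\<forall>i<k. F i \<subseteq> F (Suc i) \<and>
               (\<forall>m\<in>F (Suc i). pl (act \<iota> m) m \<in> F i)))"

definition gr_even ::
  "'g monoid \<Rightarrow> 'g \<Rightarrow> 'v set \<Rightarrow> ('v \<Rightarrow> 'v \<Rightarrow> 'v) \<Rightarrow> 'v \<Rightarrow> (rat \<Rightarrow> 'v \<Rightarrow> 'v) \<Rightarrow> ('g \<Rightarrow> 'v \<Rightarrow> 'v) \<Rightarrow> bool" where
  "gr_even G \<iota> V pl nul scale act \<longleftrightarrow>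
     (\<exists>F :: nat \<Rightarrow> 'v set. \<exists>k.
        (\<forall>i\<le>k. QG_submodule G V pl nul scale act (F i)) \<and>
        F 0 = {nul} \<and> F k = V \<and>
        (\<forall>i<k. F i \<subseteq> F (Suc i) \<and>
               (\<forall>m\<in>F (Suc i). pl (act \<iota> m) (scale (-1) m) \<in> F i)))"

definition free_space :: "('a \<times> 'b \<Rightarrow> rat) set" where
  "free_space = {f. finite {p. f p \<noteq> 0}}"

definition fdelta :: "'a \<times> 'b \<Rightarrow> ('a \<times> 'b \<Rightarrow> rat)" where
  "fdelta p = (\<lambda>q. if q = p then 1 else 0)"

definition fscale :: "rat \<Rightarrow> ('x \<Rightarrow> rat) \<Rightarrow> ('x \<Rightarrow> rat)" where
  "fscale c f = (\<lambda>q. c * f q)"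

definition tensor_rels :: "(rat \<Rightarrow> 'a::ab_group_add \<Rightarrow> 'a) \<Rightarrow> (rat \<Rightarrow> 'b::ab_group_add \<Rightarrow> 'b) \<Rightarrow> ('a \<times> 'b \<Rightarrow> rat) set" where
  "tensor_rels sA sB =
     {fdelta (a + a', b) - fdelta (a, b) - fdelta (a', b) | a a' b. True} \<union>
     {fdelta (a, b + b') - fdelta (a, b) - fdelta (a, b') | a b b'. True} \<union>
     {fdelta (sA c a, b) - fscale c (fdelta (a, b)) | c a b. True} \<union>
     {fdelta (a, sB c b) - fscale c (fdelta (a, b)) | c a b. True}"

definition tensor_null :: "(rat \<Rightarrow> 'a::ab_group_add \<Rightarrow> 'a) \<Rightarrow> (rat \<Rightarrow> 'b::ab_group_add \<Rightarrow> 'b) \<Rightarrow> ('a \<times> 'b \<Rightarrow> rat) set" where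
  "tensor_null sA sB = module.span fscale (tensor_rels sA sB)"

text \<open>Elements of A (x)_Q B are the cosets f + N of the relation subspace N.\<close>
definition tensor_class :: "(rat \<Rightarrow> 'a::ab_group_add \<Rightarrow> 'a) \<Rightarrow> (rat \<Rightarrow> 'b::ab_group_add \<Rightarrow> 'b) \<Rightarrow> ('a \<times> 'b \<Rightarrow> rat) \<Rightarrow> ('a \<times> 'b \<Rightarrow> rat) set" where
  "tensor_class sA sB f = {h. h - f \<in> tensor_null sA sB}"

definition tensor_carrier :: "(rat \<Rightarrow> 'a::ab_group_add \<Rightarrow> 'a) \<Rightarrow> (rat \<Rightarrow> 'b::ab_group_add \<Rightarrow> 'b) \<Rightarrow> ('a \<times> 'b \<Rightarrow> rat) set set" where
  "tensor_carrier sA sB = tensor_class sA sB ` free_space"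

definition tensor_rep :: "('x \<Rightarrow> rat) set \<Rightarrow> ('x \<Rightarrow> rat)" where
  "tensor_rep U = (SOME f. f \<in> U)"

definition tensor_add :: "(rat \<Rightarrow> 'a::ab_group_add \<Rightarrow> 'a) \<Rightarrow> (rat \<Rightarrow> 'b::ab_group_add \<Rightarrow> 'b) \<Rightarrow> ('a \<times> 'b \<Rightarrow> rat) set \<Rightarrow> ('a \<times> 'b \<Rightarrow> rat) set \<Rightarrow> ('a \<times> 'b \<Rightarrow> rat) set" where
  "tensor_add sA sB U W2 = tensor_class sA sB (tensor_rep U + tensor_rep W2)"

definition tensor_zero :: "(rat \<Rightarrow> 'a::ab_group_add \<Rightarrow> 'a) \<Rightarrow> (rat \<Rightarrow> 'b::ab_group_add \<Rightarrow> 'b) \<Rightarrow> ('a \<times> 'b \<Rightarrow> rat) set" where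
  "tensor_zero sA sB = tensor_class sA sB 0"

definition tensor_scale :: "(rat \<Rightarrow> 'a::ab_group_add \<Rightarrow> 'a) \<Rightarrow> (rat \<Rightarrow> 'b::ab_group_add \<Rightarrow> 'b) \<Rightarrow> rat \<Rightarrow> ('a \<times> 'b \<Rightarrow> rat) set \<Rightarrow> ('a \<times> 'b \<Rightarrow> rat) set" where
  "tensor_scale sA sB c U = tensor_class sA sB (fscale c (tensor_rep U))"

text \<open>Diagonal action: g.(a (x) b) = g.a (x) g.b, i.e. on the free space
  (g.f)(a,b) = f(g^-1 a, g^-1 b), so that g.fdelta (a,b) = fdelta (g a, g b).\<close>
definition free_act :: "'g monoid \<Rightarrow> ('g \<Rightarrow> 'a \<Rightarrow> 'a) \<Rightarrow> ('g \<Rightarrow> 'b \<Rightarrow> 'b) \<Rightarrow> 'g \<Rightarrow> ('a \<times> 'b \<Rightarrow> rat) \<Rightarrow> ('a \<times> 'b \<Rightarrow> rat)" where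
  "free_act G actA actB g f = (\<lambda>(a, b). f (actA (inv\<^bsub>G\<^esub> g) a, actB (inv\<^bsub>G\<^esub> g) b))"

definition tensor_act :: "'g monoid \<Rightarrow> (rat \<Rightarrow> 'a::ab_group_add \<Rightarrow> 'a) \<Rightarrow> (rat \<Rightarrow> 'b::ab_group_add \<Rightarrow> 'b) \<Rightarrow> ('g \<Rightarrow> 'a \<Rightarrow> 'a) \<Rightarrow> ('g \<Rightarrow> 'b \<Rightarrow> 'b) \<Rightarrow> 'g \<Rightarrow> ('a \<times> 'b \<Rightarrow> rat) set \<Rightarrow> ('a \<times> 'b \<Rightarrow> rat) set" where
  "tensor_act G sA sB actA actB g U = tensor_class sA sB (free_act G actA actB g (tensor_rep U))"

definition hom_carrier :: "(rat \<Rightarrow> 'a::ab_group_add \<Rightarrow> 'a) \<Rightarrow> (rat \<Rightarrow> 'b::ab_group_add \<Rightarrow> 'b) \<Rightarrow> ('a \<Rightarrow> 'b) set" where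
  "hom_carrier sA sB = {f. Vector_Spaces.linear sA sB f}"

definition hom_add :: "('a \<Rightarrow> 'b::ab_group_add) \<Rightarrow> ('a \<Rightarrow> 'b) \<Rightarrow> ('a \<Rightarrow> 'b)" where
  "hom_add f h = (\<lambda>x. f x + h x)"

definition hom_zero :: "'a \<Rightarrow> 'b::ab_group_add" where
  "hom_zero = (\<lambda>_. 0)"

definition hom_scale :: "(rat \<Rightarrow> 'b \<Rightarrow> 'b) \<Rightarrow> rat \<Rightarrow> ('a \<Rightarrow> 'b) \<Rightarrow> ('a \<Rightarrow> 'b)" where
  "hom_scale sB c f = (\<lambda>x. sB c (f x))"

definition hom_act :: "'g monoid \<Rightarrow> ('g \<Rightarrow> 'a \<Rightarrow> 'a) \<Rightarrow> ('g \<Rightarrow> 'b \<Rightarrow> 'b) \<Rightarrow> 'g \<Rightarrow> ('a \<Rightarrow> 'b) \<Rightarrow> ('a \<Rightarrow> 'b)" where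
  "hom_act G actA actB g f = actB g \<circ> f \<circ> actA (inv\<^bsub>G\<^esub> g)"

end

theory Submission
  imports Defs
begin

definition grs where
  "grs G \<iota> V pl nul scale act (e::rat) \<longleftrightarrow>
     (\<exists>F :: nat \<Rightarrow> _ set. \<exists>k.
        (\<forall>i\<le>k. QG_submodule G V pl nul scale act (F i)) \<and>
        F 0 = {nul} \<and> F k = V \<and>
        (\<forall>i<k. F i \<subseteq> F (Suc i) \<and>
               (\<forall>m\<in>F (Suc i). pl (act \<iota> m) (scale (-e) m) \<in> F i)))"

lemma gr_even_grs: "gr_even G \<iota> V pl nul scale act = grs G \<iota> V pl nul scale act 1"
  unfolding gr_even_def grs_def by simp

lemma gr_odd_grs:
  assumes "\<forall>m\<in>V. scale 1 m = m"
  shows "gr_odd G \<iota> V pl nul scale act = grs G \<iota> V pl nul scale act (-1)"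
proof -
  have eq: "((\<forall>i\<le>k. QG_submodule G V pl nul scale act (F i)) \<and> F 0 = {nul} \<and> F k = V \<and>
        (\<forall>i<k. F i \<subseteq> F (Suc i) \<and> (\<forall>m\<in>F (Suc i). pl (act \<iota> m) m \<in> F i))) =
        ((\<forall>i\<le>k. QG_submodule G V pl nul scale act (F i)) \<and> F 0 = {nul} \<and> F k = V \<and>
        (\<forall>i<k. F i \<subseteq> F (Suc i) \<and> (\<forall>m\<in>F (Suc i). pl (act \<iota> m) (scale (- (-1)) m) \<in> F i)))"
    for F :: "nat \<Rightarrow> _ set" and k
  proof (cases "\<forall>i\<le>k. QG_submodule G V pl nul scale act (F i)")
    case True
    have "\<forall>i<k. \<forall>m\<in>F (Suc i). scale 1 m = m"
    proof (intro allI impI ballI)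
      fix i m assume i: "i < k" and m: "m \<in> F (Suc i)"
      have "F (Suc i) \<subseteq> V" using True i unfolding QG_submodule_def by simp
      then show "scale 1 m = m" using assms m by blast
    qed
    then show ?thesis by simp
  next
    case False then show ?thesis by blast
  qed
  show ?thesis unfolding gr_odd_def grs_def by (simp only: eq)
qed

definition filt :: "'g monoid \<Rightarrow> 'g \<Rightarrow> (rat \<Rightarrow> 'v::ab_group_add \<Rightarrow> 'v) \<Rightarrow> ('g \<Rightarrow> 'v \<Rightarrow> 'v) \<Rightarrow> rat \<Rightarrow> (nat \<Rightarrow> 'v set) \<Rightarrow> nat \<Rightarrow> bool" where
  "filt G \<iota> s act e F k \<longleftrightarrow>
    (\<forall>i. 0 \<in> F i \<and> (\<forall>x\<in>F i. \<forall>y\<in>F i. x + y \<in> F i) \<and> (\<forall>c. \<forall>x\<in>F i. s c x \<in> F i)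
       \<and> (\<forall>g\<in>carrier G. \<forall>x\<in>F i. act g x \<in> F i)) \<and>
    F 0 = {0} \<and> (\<forall>i\<ge>k. F i = UNIV) \<and> (\<forall>i j. i \<le> j \<longrightarrow> F i \<subseteq> F j) \<and>
    (\<forall>i. \<forall>m\<in>F (Suc i). act \<iota> m - s e m \<in> F i)"

lemma grs_filt:
  assumes vs: "Vector_Spaces.vector_space s" and g: "grs G \<iota> UNIV (+) 0 s act e"
  shows "\<exists>F k. filt G \<iota> s act e F k"
proof -
  interpret V: Vector_Spaces.vector_space s by fact
  obtain F k where H: "(\<forall>i\<le>k. QG_submodule G UNIV (+) 0 s act (F i)) \<and> F 0 = {0} \<and> F k = UNIV \<and>
     (\<forall>i<k. F i \<subseteq> F (Suc i) \<and> (\<forall>m\<in>F (Suc i). act \<iota> m + s (-e) m \<in> F i))"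
    using g unfolding grs_def by iprover
  have sub: "\<forall>i\<le>k. QG_submodule G UNIV (+) 0 s act (F i)" using H by (rule conjunct1)
  have F0: "F 0 = {0}" using H by (elim conjE)
  have Fk: "F k = UNIV" using H by (elim conjE)
  have st: "\<forall>i<k. F i \<subseteq> F (Suc i) \<and> (\<forall>m\<in>F (Suc i). act \<iota> m + s (-e) m \<in> F i)"
    using H by (elim conjE)
  define FA where "FA i = F (min i k)" for i
  have mono0: "i \<le> j \<Longrightarrow> j \<le> k \<Longrightarrow> F i \<subseteq> F j" for i j
  proof (induction j)
    case 0 then show ?case by simp
  next
    case (Suc j)
    show ?case
    proof (cases "i = Suc j")
      case True then show ?thesis by simp
    next
      case False
      then have "i \<le> j" using Suc.prems by simp
      then have "F i \<subseteq> F j" using Suc by simp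
      moreover have "F j \<subseteq> F (Suc j)" using st Suc.prems by simp
      ultimately show ?thesis by blast
    qed
  qed
  have "filt G \<iota> s act e FA k"
    unfolding filt_def
  proof (intro conjI allI impI ballI)
    fix i
    have "QG_submodule G UNIV (+) 0 s act (FA i)" using sub FA_def by simp
    then show "0 \<in> FA i" "\<And>x y. x \<in> FA i \<Longrightarrow> y \<in> FA i \<Longrightarrow> x + y \<in> FA i"
      "\<And>c x. x \<in> FA i \<Longrightarrow> s c x \<in> FA i"
      "\<And>g x. g \<in> carrier G \<Longrightarrow> x \<in> FA i \<Longrightarrow> act g x \<in> FA i"
      unfolding QG_submodule_def by auto
  next
    show "FA 0 = {0}" using F0 FA_def by simp
  next
    fix i assume "k \<le> i" then show "FA i = UNIV" using Fk FA_def by simp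
  next
    fix i j :: nat assume "i \<le> j" then show "FA i \<subseteq> FA j" using mono0 FA_def by simp
  next
    fix i m assume m: "m \<in> FA (Suc i)"
    show "act \<iota> m - s e m \<in> FA i"
    proof (cases "i < k")
      case True
      then have "m \<in> F (Suc i)" using m FA_def by (simp add: min_def)
      then have "act \<iota> m + s (-e) m \<in> F i" using st True by blast
      then show ?thesis using True FA_def by simp
    next
      case False then show ?thesis using Fk FA_def by simp
    qed
  qed
  then show ?thesis by blast
qed

context fixes G \<iota> s act e F k assumes f: "filt G \<iota> s act e F k" begin
lemma filt_0: "0 \<in> F i" using f unfolding filt_def by simp
lemma filt_add: "x \<in> F i \<Longrightarrow> y \<in> F i \<Longrightarrow> x + y \<in> F i" using f unfolding filt_def by simp
lemma filt_sc: "x \<in> F i \<Longrightarrow> s c x \<in> F i" using f unfolding filt_def by simp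
lemma filt_act: "g \<in> carrier G \<Longrightarrow> x \<in> F i \<Longrightarrow> act g x \<in> F i" using f unfolding filt_def by simp
lemma filt_F0: "F 0 = {0}" using f unfolding filt_def by simp
lemma filt_top: "k \<le> i \<Longrightarrow> F i = UNIV" using f unfolding filt_def by simp
lemma filt_mono: "i \<le> j \<Longrightarrow> F i \<subseteq> F j" using f unfolding filt_def by simp
lemma filt_step: "m \<in> F (Suc i) \<Longrightarrow> act \<iota> m - s e m \<in> F i" using f unfolding filt_def by simp
end



lemma lin_add: "Vector_Spaces.linear s1 s2 f \<Longrightarrow> f (x + y) = f x + f y"
  by (simp add: Vector_Spaces.linear_iff)
lemma lin_scale: "Vector_Spaces.linear s1 s2 f \<Longrightarrow> f (s1 c x) = s2 c (f x)"
  by (simp add: Vector_Spaces.linear_iff)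
lemma lin_zero: "Vector_Spaces.linear s1 s2 f \<Longrightarrow> f 0 = 0"
proof -
  assume "Vector_Spaces.linear s1 s2 f"
  then interpret Vector_Spaces.linear s1 s2 f .
  show ?thesis by simp
qed
lemma lin_diff: "Vector_Spaces.linear s1 s2 f \<Longrightarrow> f (x - y) = f x - f y"
proof -
  assume "Vector_Spaces.linear s1 s2 f"
  then interpret Vector_Spaces.linear s1 s2 f .
  show ?thesis by (rule diff)
qed
lemma lin_vs1: "Vector_Spaces.linear s1 s2 f \<Longrightarrow> Vector_Spaces.vector_space s1"
  by (simp add: Vector_Spaces.linear_iff)
lemma lin_vs2: "Vector_Spaces.linear s1 s2 f \<Longrightarrow> Vector_Spaces.vector_space s2"
  by (simp add: Vector_Spaces.linear_iff)

locale QGpair =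
  fixes G :: "'g monoid" and \<iota> :: 'g
    and sA :: "rat \<Rightarrow> 'a::ab_group_add \<Rightarrow> 'a" and actA :: "'g \<Rightarrow> 'a \<Rightarrow> 'a"
    and sB :: "rat \<Rightarrow> 'b::ab_group_add \<Rightarrow> 'b" and actB :: "'g \<Rightarrow> 'b \<Rightarrow> 'b"
  assumes grp: "group G" and iota: "\<iota> \<in> carrier G"
    and mA: "QG_module G sA actA" and mB: "QG_module G sB actB"
begin

lemma vsA: "Vector_Spaces.vector_space sA" and vsB: "Vector_Spaces.vector_space sB"
  using mA mB unfolding QG_module_def by auto

interpretation A: Vector_Spaces.vector_space sA by (rule vsA)
interpretation B: Vector_Spaces.vector_space sB by (rule vsB)

lemma linA: "g \<in> carrier G \<Longrightarrow> Vector_Spaces.linear sA sA (actA g)"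
  and linB: "g \<in> carrier G \<Longrightarrow> Vector_Spaces.linear sB sB (actB g)"
  using mA mB unfolding QG_module_def by auto

lemma invA: "g \<in> carrier G \<Longrightarrow> actA g (actA (inv\<^bsub>G\<^esub> g) x) = x"
  and invA': "g \<in> carrier G \<Longrightarrow> actA (inv\<^bsub>G\<^esub> g) (actA g x) = x"
  and invB: "g \<in> carrier G \<Longrightarrow> actB g (actB (inv\<^bsub>G\<^esub> g) y) = y"
  and invB': "g \<in> carrier G \<Longrightarrow> actB (inv\<^bsub>G\<^esub> g) (actB g y) = y"
proof -
  assume g: "g \<in> carrier G"
  have i: "inv\<^bsub>G\<^esub> g \<in> carrier G" using g grp by (simp add: group.inv_closed)
  have r: "g \<otimes>\<^bsub>G\<^esub> inv\<^bsub>G\<^esub> g = \<one>\<^bsub>G\<^esub>" and l: "inv\<^bsub>G\<^esub> g \<otimes>\<^bsub>G\<^esub> g = \<one>\<^bsub>G\<^esub>"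
    using g grp by (simp_all add: group.r_inv group.l_inv)
  have "actA (g \<otimes>\<^bsub>G\<^esub> inv\<^bsub>G\<^esub> g) = actA g \<circ> actA (inv\<^bsub>G\<^esub> g)"
     "actA (inv\<^bsub>G\<^esub> g \<otimes>\<^bsub>G\<^esub> g) = actA (inv\<^bsub>G\<^esub> g) \<circ> actA g"
     "actB (g \<otimes>\<^bsub>G\<^esub> inv\<^bsub>G\<^esub> g) = actB g \<circ> actB (inv\<^bsub>G\<^esub> g)"
     "actB (inv\<^bsub>G\<^esub> g \<otimes>\<^bsub>G\<^esub> g) = actB (inv\<^bsub>G\<^esub> g) \<circ> actB g"
    using mA mB g i unfolding QG_module_def by auto
  moreover have "actA \<one>\<^bsub>G\<^esub> = id" "actB \<one>\<^bsub>G\<^esub> = id" using mA mB unfolding QG_module_def by auto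
  ultimately show "actA g (actA (inv\<^bsub>G\<^esub> g) x) = x" "actA (inv\<^bsub>G\<^esub> g) (actA g x) = x"
     "actB g (actB (inv\<^bsub>G\<^esub> g) y) = y" "actB (inv\<^bsub>G\<^esub> g) (actB g y) = y"
    using r l by (metis comp_apply id_apply)+
qed

lemma inv_car: "g \<in> carrier G \<Longrightarrow> inv\<^bsub>G\<^esub> g \<in> carrier G"
  using grp by (simp add: group.inv_closed)

lemma sign_sq: "(e::rat) \<in> {1, -1} \<Longrightarrow> e * e = 1" by auto

lemma hom_part:
  assumes fA: "filt G \<iota> sA actA eA FA kA" and fB: "filt G \<iota> sB actB eB FB kB"
    and eA: "eA \<in> {1, -1}"
  shows "grs G \<iota> (hom_carrier sA sB) hom_add hom_zero (hom_scale sB) (hom_act G actA actB) (eA * eB)"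
proof -
  note A0 = filt_0[OF fA] and Aadd = filt_add[OF fA] and Asc = filt_sc[OF fA] and Aact = filt_act[OF fA]
    and AF0 = filt_F0[OF fA] and Atop = filt_top[OF fA] and Amono = filt_mono[OF fA] and Astep = filt_step[OF fA]
  note B0 = filt_0[OF fB] and Badd = filt_add[OF fB] and Bsc = filt_sc[OF fB] and Bact = filt_act[OF fB]
    and BF0 = filt_F0[OF fB] and Btop = filt_top[OF fB] and Bmono = filt_mono[OF fB] and Bstep = filt_step[OF fB]
  have Adiff: "x \<in> FA i \<Longrightarrow> y \<in> FA i \<Longrightarrow> x - y \<in> FA i" for x y i
    using Aadd[of x i "sA (-1) y"] Asc[of y i "-1"] by simp
  have Bdiff: "x \<in> FB i \<Longrightarrow> y \<in> FB i \<Longrightarrow> x - y \<in> FB i" for x y i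
    using Badd[of x i "sB (-1) y"] Bsc[of y i "-1"] by simp
  define H where "H n = {f \<in> hom_carrier sA sB. \<forall>i. \<forall>a\<in>FA i. f a \<in> FB (i + n - kA)}" for n
  have lin_hz: "Vector_Spaces.linear sA sB hom_zero"
    unfolding Vector_Spaces.linear_iff hom_zero_def using vsA vsB by simp
  have lin_ha: "Vector_Spaces.linear sA sB (hom_add f h)"
    if "Vector_Spaces.linear sA sB f" "Vector_Spaces.linear sA sB h" for f h
    using that unfolding Vector_Spaces.linear_iff hom_add_def by (simp add: B.scale_right_distrib)
  have lin_hs: "Vector_Spaces.linear sA sB (hom_scale sB c f)"
    if "Vector_Spaces.linear sA sB f" for f c
    using that unfolding Vector_Spaces.linear_iff hom_scale_def by (simp add: B.scale_right_distrib mult.commute)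
  have lin_hact: "Vector_Spaces.linear sA sB (hom_act G actA actB g f)"
    if "Vector_Spaces.linear sA sB f" "g \<in> carrier G" for f g
    unfolding hom_act_def
    by (meson Vector_Spaces.linear_compose inv_car linA linB that)
  have sub: "QG_submodule G (hom_carrier sA sB) hom_add hom_zero (hom_scale sB) (hom_act G actA actB) (H n)" for n
    unfolding QG_submodule_def
  proof (intro conjI ballI allI)
    show "H n \<subseteq> hom_carrier sA sB" unfolding H_def by auto
    show "hom_zero \<in> H n" unfolding H_def hom_carrier_def using lin_hz B0 by (simp add: hom_zero_def)
    show "hom_add x y \<in> H n" if "x \<in> H n" "y \<in> H n" for x y
      using that lin_ha Badd unfolding H_def hom_carrier_def by (simp add: hom_add_def)
    show "hom_scale sB c x \<in> H n" if "x \<in> H n" for x c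
      using that lin_hs Bsc unfolding H_def hom_carrier_def by (simp add: hom_scale_def)
    show "hom_act G actA actB g x \<in> H n" if "x \<in> H n" "g \<in> carrier G" for x g
      using that lin_hact Bact Aact inv_car unfolding H_def hom_carrier_def by (simp add: hom_act_def)
  qed
  have H0: "H 0 = {hom_zero}"
  proof
    show "{hom_zero} \<subseteq> H 0" using sub[of 0] unfolding QG_submodule_def by simp
    show "H 0 \<subseteq> {hom_zero}"
    proof
      fix f assume f: "f \<in> H 0"
      have "f a = 0" for a
      proof -
        have "a \<in> FA kA" using Atop by simp
        then have "f a \<in> FB 0" using f unfolding H_def by fastforce
        then show ?thesis using BF0 by simp
      qed
      then show "f \<in> {hom_zero}" by (simp add: hom_zero_def fun_eq_iff)
    qed
  qed
  have Htop: "H (kA + kB) = hom_carrier sA sB"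
    unfolding H_def using Btop by auto
  have Hmono: "H n \<subseteq> H (Suc n)" for n
  proof
    fix f assume f: "f \<in> H n"
    have "f a \<in> FB (i + Suc n - kA)" if "a \<in> FA i" for a i
    proof -
      have "f a \<in> FB (i + n - kA)" using f that unfolding H_def by blast
      moreover have "FB (i + n - kA) \<subseteq> FB (i + Suc n - kA)" by (rule Bmono) simp
      ultimately show ?thesis by blast
    qed
    then show "f \<in> H (Suc n)" using f unfolding H_def by auto
  qed
  have Hstep: "hom_add (hom_act G actA actB \<iota> f) (hom_scale sB (- (eA * eB)) f) \<in> H n"
    if f: "f \<in> H (Suc n)" for f n
  proof -
    have fl: "Vector_Spaces.linear sA sB f" using f unfolding H_def hom_carrier_def by simp
    have ff: "a \<in> FA i \<Longrightarrow> f a \<in> FB (i + Suc n - kA)" for a i using f unfolding H_def by blast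
    let ?g = "hom_add (hom_act G actA actB \<iota> f) (hom_scale sB (- (eA * eB)) f)"
    have gl: "Vector_Spaces.linear sA sB ?g" using lin_ha lin_hs lin_hact fl iota by blast
    have "?g a \<in> FB (i + n - kA)" if a: "a \<in> FA i" for a i
    proof (cases i)
      case 0
      then have "a = 0" using a AF0 by simp
      then show ?thesis using lin_zero[OF gl] B0 by simp
    next
      case (Suc i0)
      define a' where "a' = actA (inv\<^bsub>G\<^esub> \<iota>) a"
      have a'F: "a' \<in> FA i" unfolding a'_def using Aact a inv_car iota by blast
      have ia': "actA \<iota> a' = a" unfolding a'_def using invA iota by simp
      have "a - sA eA a' \<in> FA i0" using Astep[of a' i0] a'F Suc ia' by simp
      then have "sA (- eA) (a - sA eA a') \<in> FA i0" using Asc by blast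
      moreover have "sA (- eA) (a - sA eA a') = a' - sA eA a"
        using sign_sq[OF eA] by (simp add: A.scale_right_diff_distrib)
      ultimately have dF: "a' - sA eA a \<in> FA i0" by simp
      define d where "d = a' - sA eA a"
      have fa': "f a' = sB eA (f a) + f d"
        unfolding d_def using fl by (simp add: lin_diff lin_scale)
      have fd: "f d \<in> FB (i + n - kA)" using ff[OF dF[folded d_def]] Suc by simp
      have key: "actB \<iota> (f a) - sB eB (f a) \<in> FB (i + n - kA)"
      proof (cases "kA \<le> i + n")
        case True
        then have "i + Suc n - kA = Suc (i + n - kA)" by simp
        then show ?thesis using ff[OF a] Bstep by simp
      next
        case False
        then have "i + Suc n - kA = 0" by simp
        then have "f a = 0" using ff[OF a] BF0 by simp
        then show ?thesis using lin_zero[OF linB[OF iota]] B0 by (simp add: B.scale_zero_right)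
      qed
      have "?g a = actB \<iota> (f a') + sB (- (eA * eB)) (f a)"
        by (simp add: hom_add_def hom_act_def hom_scale_def a'_def)
      also have "\<dots> = sB eA (actB \<iota> (f a) - sB eB (f a)) + actB \<iota> (f d)"
        using linB[OF iota] by (simp add: fa' lin_add lin_scale B.scale_right_diff_distrib)
      finally show ?thesis using key fd Bsc Badd Bact iota by simp
    qed
    then show ?thesis using gl unfolding H_def hom_carrier_def by simp
  qed
  show ?thesis unfolding grs_def
  proof (rule exI[of _ H], rule exI[of _ "kA + kB"], intro conjI allI impI ballI)
    show "H 0 = {hom_zero}" by (rule H0)
    show "H (kA + kB) = hom_carrier sA sB" by (rule Htop)
  qed (use sub Hmono Hstep in auto)
qed

end


lemma FSvs: "Vector_Spaces.vector_space (fscale :: rat \<Rightarrow> ('x \<Rightarrow> rat) \<Rightarrow> ('x \<Rightarrow> rat))"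
  by unfold_locales (simp_all add: fscale_def fun_eq_iff algebra_simps)

interpretation FS: Vector_Spaces.vector_space "fscale :: rat \<Rightarrow> ('x \<Rightarrow> rat) \<Rightarrow> ('x \<Rightarrow> rat)"
  by (rule FSvs)

lemma sum_fun_app: "(\<Sum>p\<in>S. g p) (q::'x) = (\<Sum>p\<in>S. g p q)"
  by (induction S rule: infinite_finite_induct) auto

lemma FS_span_into:
  assumes l: "Vector_Spaces.linear fscale fscale \<phi>"
    and W: "FS.subspace W" and S: "\<And>s. s \<in> S \<Longrightarrow> \<phi> s \<in> W"
    and x: "x \<in> FS.span S"
  shows "\<phi> x \<in> W"
proof -
  interpret L: Vector_Spaces.linear fscale fscale \<phi> by (rule l)
  have "FS.subspace (\<phi> -` W)" using L.subspace_vimage W by simp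
  moreover have "S \<subseteq> \<phi> -` W" using S by blast
  ultimately have "FS.span S \<subseteq> \<phi> -` W" by (rule FS.span_minimal[rotated])
  then show ?thesis using x by blast
qed

lemma free_space_sub: "FS.subspace (free_space :: ('a \<times> 'b \<Rightarrow> rat) set)"
proof (rule FS.subspaceI)
  show "0 \<in> (free_space :: ('a \<times> 'b \<Rightarrow> rat) set)" by (simp add: free_space_def)
  fix x y :: "'a \<times> 'b \<Rightarrow> rat"
  assume x: "x \<in> free_space" and y: "y \<in> free_space"
  have "{p. (x + y) p \<noteq> 0} \<subseteq> {p. x p \<noteq> 0} \<union> {p. y p \<noteq> 0}" by auto
  then show "x + y \<in> free_space" using x y unfolding free_space_def by (auto intro: finite_subset)
next
  fix c and x :: "'a \<times> 'b \<Rightarrow> rat"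
  assume x: "x \<in> free_space"
  have "{p. fscale c x p \<noteq> 0} \<subseteq> {p. x p \<noteq> 0}" by (auto simp: fscale_def)
  then show "fscale c x \<in> free_space" using x unfolding free_space_def by (auto intro: finite_subset)
qed

lemma fdelta_free: "fdelta p \<in> free_space"
proof -
  have "{q. fdelta p q \<noteq> 0} = {p}" by (auto simp: fdelta_def)
  then show ?thesis unfolding free_space_def by simp
qed

lemma free_space_span: "(f :: 'a \<times> 'b \<Rightarrow> rat) \<in> free_space \<Longrightarrow> f \<in> FS.span (range fdelta)"
proof -
  assume f: "f \<in> free_space"
  define S where "S = {p. f p \<noteq> 0}"
  have fin: "finite S" using f unfolding free_space_def S_def by simp
  have "f = (\<Sum>p\<in>S. fscale (f p) (fdelta p))"
  proof
    fix q
    have "(\<Sum>p\<in>S. fscale (f p) (fdelta p)) q = (\<Sum>p\<in>S. if p = q then f p else 0)"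
      unfolding sum_fun_app by (rule sum.cong) (auto simp: fscale_def fdelta_def)
    also have "\<dots> = f q" using fin by (simp add: S_def)
    finally show "f q = (\<Sum>p\<in>S. fscale (f p) (fdelta p)) q" by simp
  qed
  also have "\<dots> \<in> FS.span (range fdelta)"
    by (intro FS.span_sum FS.span_scale FS.span_base) simp
  finally show ?thesis .
qed

context QGpair begin

interpretation A: Vector_Spaces.vector_space sA by (rule vsA)
interpretation B: Vector_Spaces.vector_space sB by (rule vsB)

abbreviation "N \<equiv> tensor_null sA sB"
abbreviation "cls \<equiv> tensor_class sA sB"

lemma N_sub: "FS.subspace N"
  unfolding tensor_null_def by simp

lemma N_add: "x \<in> N \<Longrightarrow> y \<in> N \<Longrightarrow> x + y \<in> N"
  and N_diff: "x \<in> N \<Longrightarrow> y \<in> N \<Longrightarrow> x - y \<in> N"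
  and N_scale: "x \<in> N \<Longrightarrow> fscale c x \<in> N"
  and N_zero: "0 \<in> N"
  and N_neg: "x \<in> N \<Longrightarrow> - x \<in> N"
  unfolding tensor_null_def
  by (simp_all add: FS.span_add FS.span_diff FS.span_scale FS.span_zero FS.span_neg)

lemma rel_N:
  "fdelta (a + a', b) - fdelta (a, b) - fdelta (a', b) \<in> N"
  "fdelta (a, b + b') - fdelta (a, b) - fdelta (a, b') \<in> N"
  "fdelta (sA c a, b) - fscale c (fdelta (a, b)) \<in> N"
  "fdelta (a, sB c b) - fscale c (fdelta (a, b)) \<in> N"
  unfolding tensor_null_def tensor_rels_def by (rule FS.span_base; blast)+

lemma delta0_N: "fdelta (0, b) \<in> N" "fdelta (a, 0) \<in> N"
proof -
  have "- fdelta (0, b) \<in> N" using rel_N(1)[of 0 0 b] by simp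
  then show "fdelta (0, b) \<in> N" using N_neg by fastforce
  have "- fdelta (a, 0) \<in> N" using rel_N(2)[of a 0 0] by simp
  then show "fdelta (a, 0) \<in> N" using N_neg by fastforce
qed

lemma cls_eq: "cls f = cls h \<longleftrightarrow> f - h \<in> N"
proof
  assume "cls f = cls h"
  moreover have "f \<in> cls f" unfolding tensor_class_def using N_zero by simp
  ultimately show "f - h \<in> N" unfolding tensor_class_def by simp
next
  assume a: "f - h \<in> N"
  have "x - f \<in> N \<longleftrightarrow> x - h \<in> N" for x
  proof
    assume xf: "x - f \<in> N"
    have "(x - f) + (f - h) \<in> N" by (rule N_add[OF xf a])
    then show "x - h \<in> N" by simp
  next
    assume xh: "x - h \<in> N"
    have "(x - h) - (f - h) \<in> N" by (rule N_diff[OF xh a])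
    then show "x - f \<in> N" by simp
  qed
  then show "cls f = cls h" unfolding tensor_class_def by simp
qed

lemma rep_cls: "tensor_rep (cls f) - f \<in> N"
proof -
  have "f \<in> cls f" unfolding tensor_class_def using N_zero by simp
  then have "tensor_rep (cls f) \<in> cls f" unfolding tensor_rep_def by (rule someI[of "\<lambda>x. x \<in> cls f"])
  then show ?thesis unfolding tensor_class_def by simp
qed

lemma add_cls: "tensor_add sA sB (cls f) (cls h) = cls (f + h)"
proof -
  have "tensor_rep (cls f) + tensor_rep (cls h) - (f + h) =
        (tensor_rep (cls f) - f) + (tensor_rep (cls h) - h)" by simp
  then show ?thesis unfolding tensor_add_def cls_eq using N_add rep_cls by metis
qed

lemma scale_cls: "tensor_scale sA sB c (cls f) = cls (fscale c f)"
proof -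
  have "fscale c (tensor_rep (cls f)) - fscale c f = fscale c (tensor_rep (cls f) - f)"
    by (simp add: FS.scale_right_diff_distrib)
  then show ?thesis unfolding tensor_scale_def cls_eq using N_scale rep_cls by metis
qed

lemma zero_cls: "tensor_zero sA sB = cls 0"
  unfolding tensor_zero_def ..

lemma fa_lin: "Vector_Spaces.linear fscale fscale (free_act G actA actB g)"
  unfolding Vector_Spaces.linear_iff using FSvs
  by (simp add: free_act_def fscale_def fun_eq_iff split_def)

lemma fa_delta: "g \<in> carrier G \<Longrightarrow> free_act G actA actB g (fdelta (a, b)) = fdelta (actA g a, actB g b)"
  unfolding free_act_def fdelta_def fun_eq_iff
  by (auto simp: invA invA' invB invB')

lemma fa_N: assumes g: "g \<in> carrier G" and x: "x \<in> N" shows "free_act G actA actB g x \<in> N"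
proof -
  have "free_act G actA actB g r \<in> N" if r: "r \<in> tensor_rels sA sB" for r
  proof -
    note l = lin_diff[OF fa_lin] lin_scale[OF fa_lin] fa_delta[OF g]
    note la = lin_add[OF linA[OF g]] lin_scale[OF linA[OF g]]
    note lb = lin_add[OF linB[OF g]] lin_scale[OF linB[OF g]]
    from r show ?thesis unfolding tensor_rels_def
    proof (elim UnE CollectE exE conjE)
      fix a a' b assume "r = fdelta (a + a', b) - fdelta (a, b) - fdelta (a', b)"
      then show ?thesis using rel_N(1) by (simp add: l la)
    next
      fix a b b' assume "r = fdelta (a, b + b') - fdelta (a, b) - fdelta (a, b')"
      then show ?thesis using rel_N(2) by (simp add: l lb)
    next
      fix c a b assume "r = fdelta (sA c a, b) - fscale c (fdelta (a, b))"
      then show ?thesis using rel_N(3) by (simp add: l la)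
    next
      fix c a b assume "r = fdelta (a, sB c b) - fscale c (fdelta (a, b))"
      then show ?thesis using rel_N(4) by (simp add: l lb)
    qed
  qed
  then show ?thesis using FS_span_into[OF fa_lin N_sub _ x[unfolded tensor_null_def]] by blast
qed

lemma act_cls: "g \<in> carrier G \<Longrightarrow> tensor_act G sA sB actA actB g (cls f) = cls (free_act G actA actB g f)"
  unfolding tensor_act_def cls_eq
  by (metis fa_N lin_diff[OF fa_lin] rep_cls)

end


context QGpair begin

interpretation A: Vector_Spaces.vector_space sA by (rule vsA)
interpretation B: Vector_Spaces.vector_space sB by (rule vsB)

lemma bilin_expand:
  "fdelta (sA eA a + a1, sB eB b + b1) - fscale (eA*eB) (fdelta (a,b))
     - (fscale eA (fdelta (a, b1)) + fscale eB (fdelta (a1, b)) + fdelta (a1, b1)) \<in> N"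
proof -
  let ?X = "sA eA a" and ?Y = "sB eB b + b1" and ?Z = "sB eB b"
  define r1 where "r1 = fdelta (?X + a1, ?Y) - fdelta (?X, ?Y) - fdelta (a1, ?Y)"
  define r2 where "r2 = fdelta (?X, ?Z + b1) - fdelta (?X, ?Z) - fdelta (?X, b1)"
  define r3 where "r3 = fdelta (a1, ?Z + b1) - fdelta (a1, ?Z) - fdelta (a1, b1)"
  define r4 where "r4 = fdelta (?X, ?Z) - fscale eA (fdelta (a, ?Z))"
  define r5 where "r5 = fdelta (a, ?Z) - fscale eB (fdelta (a, b))"
  define r6 where "r6 = fdelta (?X, b1) - fscale eA (fdelta (a, b1))"
  define r7 where "r7 = fdelta (a1, ?Z) - fscale eB (fdelta (a1, b))"
  have "r1 \<in> N" "r2 \<in> N" "r3 \<in> N" "r4 \<in> N" "r5 \<in> N" "r6 \<in> N" "r7 \<in> N"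
    unfolding r1_def r2_def r3_def r4_def r5_def r6_def r7_def by (rule rel_N)+
  then have "r1 + r2 + r3 + r4 + fscale eA r5 + r6 + r7 \<in> N"
    by (intro N_add N_scale)
  moreover have "r1 + r2 + r3 + r4 + fscale eA r5 + r6 + r7 =
     fdelta (sA eA a + a1, sB eB b + b1) - fscale (eA*eB) (fdelta (a,b))
     - (fscale eA (fdelta (a, b1)) + fscale eB (fdelta (a1, b)) + fdelta (a1, b1))"
    unfolding r1_def r2_def r3_def r4_def r5_def r6_def r7_def
    by (simp add: fun_eq_iff fscale_def algebra_simps)
  ultimately show ?thesis by simp
qed


lemma tensor_part:
  assumes fA: "filt G \<iota> sA actA eA FA kA" and fB: "filt G \<iota> sB actB eB FB kB"
  shows "grs G \<iota> (tensor_carrier sA sB) (tensor_add sA sB) (tensor_zero sA sB)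
           (tensor_scale sA sB) (tensor_act G sA sB actA actB) (eA * eB)"
proof -
  note A0 = filt_0[OF fA] and Aadd = filt_add[OF fA] and Asc = filt_sc[OF fA] and Aact = filt_act[OF fA]
    and AF0 = filt_F0[OF fA] and Atop = filt_top[OF fA] and Amono = filt_mono[OF fA] and Astep = filt_step[OF fA]
  note B0 = filt_0[OF fB] and Badd = filt_add[OF fB] and Bsc = filt_sc[OF fB] and Bact = filt_act[OF fB]
    and BF0 = filt_F0[OF fB] and Btop = filt_top[OF fB] and Bmono = filt_mono[OF fB] and Bstep = filt_step[OF fB]
  define D where "D n = {fdelta (a, b) | a b i j. i + j \<le> n \<and> a \<in> FA i \<and> b \<in> FB j}" for n
  define S where "S n = FS.span (D n)" for n
  define T where "T n = cls ` S n" for n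
  have DI: "fdelta (a, b) \<in> D n" if "i + j \<le> n" "a \<in> FA i" "b \<in> FB j" for a b i j n
    unfolding D_def using that by blast
  have DE: "\<exists>a b i j. d = fdelta (a, b) \<and> i + j \<le> n \<and> a \<in> FA i \<and> b \<in> FB j" if "d \<in> D n" for d n
    using that unfolding D_def by blast
  have Ssub: "FS.subspace (S n)" for n unfolding S_def by simp
  have SD: "d \<in> D n \<Longrightarrow> d \<in> S n" for d n unfolding S_def by (rule FS.span_base)
  have Sfree: "S n \<subseteq> free_space" for n
    unfolding S_def by (rule FS.span_minimal[OF _ free_space_sub]) (auto simp: D_def fdelta_free)
  have Sact: "free_act G actA actB g x \<in> S n" if g: "g \<in> carrier G" and x: "x \<in> S n" for g x n
  proof (rule FS_span_into[OF fa_lin Ssub _ x[unfolded S_def]])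
    fix d assume "d \<in> D n"
    then obtain a b i j where d: "d = fdelta (a, b)" "i + j \<le> n" "a \<in> FA i" "b \<in> FB j"
      using DE by blast
    have "free_act G actA actB g d = fdelta (actA g a, actB g b)" using d fa_delta[OF g] by simp
    also have "\<dots> \<in> S n" using d g Aact Bact by (intro SD DI) auto
    finally show "free_act G actA actB g d \<in> S n" .
  qed
  have sub: "QG_submodule G (tensor_carrier sA sB) (tensor_add sA sB) (tensor_zero sA sB)
           (tensor_scale sA sB) (tensor_act G sA sB actA actB) (T n)" for n
    unfolding QG_submodule_def
  proof (intro conjI ballI allI)
    show "T n \<subseteq> tensor_carrier sA sB" unfolding T_def tensor_carrier_def using Sfree by (rule image_mono)
    show "tensor_zero sA sB \<in> T n" unfolding T_def zero_cls using FS.subspace_0[OF Ssub] by blast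
  next
    fix x y assume "x \<in> T n" "y \<in> T n"
    then obtain f h where fh: "f \<in> S n" "h \<in> S n" and xy: "x = cls f" "y = cls h" unfolding T_def by blast
    have "f + h \<in> S n" using FS.subspace_add[OF Ssub fh] .
    then show "tensor_add sA sB x y \<in> T n" unfolding T_def xy add_cls by (rule imageI)
  next
    fix c x assume "x \<in> T n"
    then obtain f where fS: "f \<in> S n" and xf: "x = cls f" unfolding T_def by blast
    have "fscale c f \<in> S n" using FS.subspace_scale[OF Ssub fS] .
    then show "tensor_scale sA sB c x \<in> T n" unfolding T_def xf scale_cls by (rule imageI)
  next
    fix g x assume g: "g \<in> carrier G" and "x \<in> T n"
    then obtain f where fS: "f \<in> S n" and xf: "x = cls f" unfolding T_def by blast
    have "free_act G actA actB g f \<in> S n" using Sact[OF g fS] .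
    then show "tensor_act G sA sB actA actB g x \<in> T n" unfolding T_def xf act_cls[OF g] by (rule imageI)
  qed
  have T0: "T 0 = {tensor_zero sA sB}"
  proof -
    have "D 0 \<subseteq> N"
    proof
      fix d assume "d \<in> D 0"
      then obtain a b i j where d: "d = fdelta (a, b)" "i + j \<le> 0" "a \<in> FA i" "b \<in> FB j"
        using DE by blast
      then have "a = 0" using AF0 by simp
      then show "d \<in> N" using d delta0_N by simp
    qed
    then have "S 0 \<subseteq> N" unfolding S_def by (rule FS.span_minimal[OF _ N_sub])
    then have "cls f = cls 0" if "f \<in> S 0" for f using that cls_eq by auto
    moreover have "0 \<in> S 0" using FS.subspace_0[OF Ssub] .
    ultimately show ?thesis unfolding T_def zero_cls by blast
  qed
  have Ttop: "T (kA + kB) = tensor_carrier sA sB"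
  proof
    show "T (kA + kB) \<subseteq> tensor_carrier sA sB" using sub[of "kA + kB"] unfolding QG_submodule_def by simp
    have "range fdelta \<subseteq> D (kA + kB)"
    proof
      fix d assume "d \<in> range (fdelta :: 'a \<times> 'b \<Rightarrow> _)"
      then obtain a b where "d = fdelta (a, b)" by auto
      moreover have "fdelta (a, b) \<in> D (kA + kB)" using Atop[of kA] Btop[of kB] by (intro DI[of kA kB]) auto
      ultimately show "d \<in> D (kA + kB)" by simp
    qed
    then have "free_space \<subseteq> S (kA + kB)" unfolding S_def using free_space_span FS.span_mono by blast
    then show "tensor_carrier sA sB \<subseteq> T (kA + kB)" unfolding T_def tensor_carrier_def by (rule image_mono)
  qed
  have Tmono: "T n \<subseteq> T (Suc n)" for n
  proof -
    have "D n \<subseteq> D (Suc n)"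
    proof
      fix d assume "d \<in> D n"
      then obtain a b i j where d: "d = fdelta (a, b)" "i + j \<le> n" "a \<in> FA i" "b \<in> FB j"
        using DE by blast
      then show "d \<in> D (Suc n)" using DI[of i j "Suc n" a b] by simp
    qed
    then have "S n \<subseteq> S (Suc n)" unfolding S_def by (rule FS.span_mono)
    then show ?thesis unfolding T_def by (rule image_mono)
  qed
  have Tstep: "tensor_add sA sB (tensor_act G sA sB actA actB \<iota> U) (tensor_scale sA sB (- (eA * eB)) U) \<in> T n"
    if U: "U \<in> T (Suc n)" for U n
  proof -
    obtain f where f: "f \<in> S (Suc n)" and Uf: "U = cls f" using U unfolding T_def by blast
    define \<phi> where "\<phi> x = free_act G actA actB \<iota> x + fscale (- (eA * eB)) x" for x
    have eqU: "tensor_add sA sB (tensor_act G sA sB actA actB \<iota> U) (tensor_scale sA sB (- (eA * eB)) U) = cls (\<phi> f)"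
      unfolding Uf act_cls[OF iota] scale_cls add_cls \<phi>_def ..
    define W where "W = {x. \<exists>h\<in>S n. x - h \<in> N}"
    have Wsub: "FS.subspace W"
    proof (rule FS.subspaceI)
      show "0 \<in> W" unfolding W_def using FS.subspace_0[OF Ssub] N_zero by force
    next
      fix x y assume "x \<in> W" "y \<in> W"
      then obtain h1 h2 where "h1 \<in> S n" "x - h1 \<in> N" "h2 \<in> S n" "y - h2 \<in> N" unfolding W_def by blast
      moreover have "x + y - (h1 + h2) = (x - h1) + (y - h2)" by simp
      ultimately have "h1 + h2 \<in> S n" "x + y - (h1 + h2) \<in> N"
        using FS.subspace_add[OF Ssub] N_add by (simp, metis)
      then show "x + y \<in> W" unfolding W_def by blast
    next
      fix c x assume "x \<in> W"
      then obtain h where "h \<in> S n" "x - h \<in> N" unfolding W_def by blast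
      moreover have "fscale c x - fscale c h = fscale c (x - h)" by (simp add: FS.scale_right_diff_distrib)
      ultimately have "fscale c h \<in> S n" "fscale c x - fscale c h \<in> N"
        using FS.subspace_scale[OF Ssub] N_scale by (simp, metis)
      then show "fscale c x \<in> W" unfolding W_def by blast
    qed
    have \<phi>lin: "Vector_Spaces.linear fscale fscale \<phi>"
      unfolding Vector_Spaces.linear_iff \<phi>_def using FSvs lin_add[OF fa_lin] lin_scale[OF fa_lin]
      by (simp add: FS.scale_right_distrib FS.scale_right_diff_distrib mult.commute)
    have \<phi>D: "\<phi> d \<in> W" if d: "d \<in> D (Suc n)" for d
    proof -
      obtain a b i j where dd: "d = fdelta (a, b)" "i + j \<le> Suc n" "a \<in> FA i" "b \<in> FB j"
        using DE[OF d] by blast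
      show ?thesis
      proof (cases "i + j \<le> n")
        case True
        then have "d \<in> S n" using dd SD DI[of i j n a b] by simp
        then have "\<phi> d \<in> S n" unfolding \<phi>_def
          by (intro FS.subspace_add[OF Ssub] FS.subspace_scale[OF Ssub] Sact[OF iota])
        then show ?thesis unfolding W_def using N_zero by force
      next
        case False
        show ?thesis
        proof (cases "i = 0 \<or> j = 0")
          case True
          then have "d \<in> N"
          proof
            assume "i = 0" then have "a = 0" using dd AF0 by simp
            then show "d \<in> N" using dd delta0_N by simp
          next
            assume "j = 0" then have "b = 0" using dd BF0 by simp
            then show "d \<in> N" using dd delta0_N by simp
          qed
          then have "\<phi> d \<in> N" unfolding \<phi>_def by (intro fa_N[OF iota] N_add N_scale)
          then show ?thesis unfolding W_def using FS.subspace_0[OF Ssub] by force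
        next
          case False2: False
          then obtain i0 j0 where ij: "i = Suc i0" "j = Suc j0" by (metis not0_implies_Suc)
          have ijn: "i + j = Suc n" using False dd(2) by simp
          define a1 where "a1 = actA \<iota> a - sA eA a"
          define b1 where "b1 = actB \<iota> b - sB eB b"
          have a1F: "a1 \<in> FA i0" unfolding a1_def using Astep dd(3) ij by simp
          have b1F: "b1 \<in> FB j0" unfolding b1_def using Bstep dd(4) ij by simp
          have ia: "actA \<iota> a = sA eA a + a1" and ib: "actB \<iota> b = sB eB b + b1"
            unfolding a1_def b1_def by simp_all
          define h where "h = fscale eA (fdelta (a, b1)) + fscale eB (fdelta (a1, b)) + fdelta (a1, b1)"
          have "fdelta (a, b1) \<in> S n" using dd(3) b1F ij ijn by (intro SD DI[of i j0]) auto
          moreover have "fdelta (a1, b) \<in> S n" using dd(4) a1F ij ijn by (intro SD DI[of i0 j]) auto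
          moreover have "fdelta (a1, b1) \<in> S n" using a1F b1F ij ijn by (intro SD DI[of i0 j0]) auto
          ultimately have hS: "h \<in> S n" unfolding h_def
            by (intro FS.subspace_add[OF Ssub] FS.subspace_scale[OF Ssub])
          have "\<phi> d = fdelta (sA eA a + a1, sB eB b + b1) - fscale (eA*eB) (fdelta (a,b))"
            unfolding \<phi>_def dd(1) fa_delta[OF iota] ia ib by simp
          then have "\<phi> d - h \<in> N" unfolding h_def using bilin_expand by simp
          then show ?thesis unfolding W_def using hS by blast
        qed
      qed
    qed
    have "\<phi> f \<in> W" using FS_span_into[OF \<phi>lin Wsub \<phi>D f[unfolded S_def]] .
    then obtain h where "h \<in> S n" "\<phi> f - h \<in> N" unfolding W_def by blast
    then have "cls (\<phi> f) = cls h" "h \<in> S n" using cls_eq by simp_all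
    then have "cls (\<phi> f) \<in> T n" unfolding T_def by simp
    then show ?thesis using eqU by simp
  qed
  show ?thesis unfolding grs_def
  proof (rule exI[of _ T], rule exI[of _ "kA + kB"], intro conjI allI impI ballI)
    show "T 0 = {tensor_zero sA sB}" by (rule T0)
    show "T (kA + kB) = tensor_carrier sA sB" by (rule Ttop)
  qed (use sub Tmono Tstep in auto)
qed

end


context QGpair begin

interpretation A: Vector_Spaces.vector_space sA by (rule vsA)
interpretation B: Vector_Spaces.vector_space sB by (rule vsB)

lemma main_grs:
  assumes a: "grs G \<iota> UNIV (+) 0 sA actA eA" and b: "grs G \<iota> UNIV (+) 0 sB actB eB"
    and eA: "eA \<in> {1, -1}"
  shows "grs G \<iota> (tensor_carrier sA sB) (tensor_add sA sB) (tensor_zero sA sB)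
           (tensor_scale sA sB) (tensor_act G sA sB actA actB) (eA * eB)"
    "grs G \<iota> (hom_carrier sA sB) hom_add hom_zero (hom_scale sB) (hom_act G actA actB) (eA * eB)"
proof -
  obtain FA kA where fA: "filt G \<iota> sA actA eA FA kA" using grs_filt[OF vsA a] by blast
  obtain FB kB where fB: "filt G \<iota> sB actB eB FB kB" using grs_filt[OF vsB b] by blast
  show "grs G \<iota> (tensor_carrier sA sB) (tensor_add sA sB) (tensor_zero sA sB)
           (tensor_scale sA sB) (tensor_act G sA sB actA actB) (eA * eB)"
    by (rule tensor_part[OF fA fB])
  show "grs G \<iota> (hom_carrier sA sB) hom_add hom_zero (hom_scale sB) (hom_act G actA actB) (eA * eB)"
    by (rule hom_part[OF fA fB eA])
qed

lemma A_odd: "gr_odd G \<iota> UNIV (+) 0 sA actA = grs G \<iota> UNIV (+) 0 sA actA (-1)"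
  by (rule gr_odd_grs) simp
lemma B_odd: "gr_odd G \<iota> UNIV (+) 0 sB actB = grs G \<iota> UNIV (+) 0 sB actB (-1)"
  by (rule gr_odd_grs) simp
lemma T_odd: "gr_odd G \<iota> (tensor_carrier sA sB) (tensor_add sA sB) (tensor_zero sA sB)
           (tensor_scale sA sB) (tensor_act G sA sB actA actB) =
   grs G \<iota> (tensor_carrier sA sB) (tensor_add sA sB) (tensor_zero sA sB)
           (tensor_scale sA sB) (tensor_act G sA sB actA actB) (-1)"
proof (rule gr_odd_grs, rule ballI)
  fix U assume "U \<in> tensor_carrier sA sB"
  then obtain f where "U = cls f" unfolding tensor_carrier_def by blast
  then show "tensor_scale sA sB 1 U = U" by (simp add: scale_cls)
qed
lemma H_odd: "gr_odd G \<iota> (hom_carrier sA sB) hom_add hom_zero (hom_scale sB) (hom_act G actA actB) =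
   grs G \<iota> (hom_carrier sA sB) hom_add hom_zero (hom_scale sB) (hom_act G actA actB) (-1)"
  by (rule gr_odd_grs) (simp add: hom_scale_def)

end

theorem proposition3p4p4:
  fixes G :: "'g monoid" and \<iota> :: 'g and L :: "'g set"
    and sA :: "rat \<Rightarrow> 'a::ab_group_add \<Rightarrow> 'a" and actA :: "'g \<Rightarrow> 'a \<Rightarrow> 'a"
    and sB :: "rat \<Rightarrow> 'b::ab_group_add \<Rightarrow> 'b" and actB :: "'g \<Rightarrow> 'b \<Rightarrow> 'b"
  assumes "group G" and "\<iota> \<in> carrier G"
    and "L \<lhd> G" and "finite L"
    and "\<forall>x\<in>carrier (G Mod L). (L #>\<^bsub>G\<^esub> \<iota>) \<otimes>\<^bsub>G Mod L\<^esub> x = x \<otimes>\<^bsub>G Mod L\<^esub> (L #>\<^bsub>G\<^esub> \<iota>)"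
    and "QG_module G sA actA" and "QG_module G sB actB"
  shows
   "(gr_odd G \<iota> UNIV (+) 0 sA actA \<longrightarrow>
      (gr_odd G \<iota> UNIV (+) 0 sB actB \<longrightarrow>
         gr_even G \<iota> (tensor_carrier sA sB) (tensor_add sA sB) (tensor_zero sA sB)
                   (tensor_scale sA sB) (tensor_act G sA sB actA actB) \<and>
         gr_even G \<iota> (hom_carrier sA sB) hom_add hom_zero (hom_scale sB) (hom_act G actA actB)) \<and>
      (gr_even G \<iota> UNIV (+) 0 sB actB \<longrightarrow>
         gr_odd G \<iota> (tensor_carrier sA sB) (tensor_add sA sB) (tensor_zero sA sB)
                   (tensor_scale sA sB) (tensor_act G sA sB actA actB) \<and>
         gr_odd G \<iota> (hom_carrier sA sB) hom_add hom_zero (hom_scale sB) (hom_act G actA actB))) \<and>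
    (gr_even G \<iota> UNIV (+) 0 sA actA \<longrightarrow>
      (gr_odd G \<iota> UNIV (+) 0 sB actB \<longrightarrow>
         gr_odd G \<iota> (tensor_carrier sA sB) (tensor_add sA sB) (tensor_zero sA sB)
                   (tensor_scale sA sB) (tensor_act G sA sB actA actB) \<and>
         gr_odd G \<iota> (hom_carrier sA sB) hom_add hom_zero (hom_scale sB) (hom_act G actA actB)) \<and>
      (gr_even G \<iota> UNIV (+) 0 sB actB \<longrightarrow>
         gr_even G \<iota> (tensor_carrier sA sB) (tensor_add sA sB) (tensor_zero sA sB)
                   (tensor_scale sA sB) (tensor_act G sA sB actA actB) \<and>
         gr_even G \<iota> (hom_carrier sA sB) hom_add hom_zero (hom_scale sB) (hom_act G actA actB)))"
proof -
  interpret QGpair G \<iota> sA actA sB actB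
    using assms(1,2,6,7) by (rule QGpair.intro)
  show ?thesis
    unfolding A_odd B_odd T_odd H_odd gr_even_grs
    using main_grs[of "-1" "-1"] main_grs[of "-1" "1"] main_grs[of "1" "-1"] main_grs[of "1" "1"]
    by simp
qed


end
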